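(* Let $m>0$, $n$ an odd positive integer, $\epsilon>0$, $V=[-m/2,m/2]$. For every $\alpha\in[0,1]$, the mechanism $\mathtt{DPExpMed}_\alpha$ is $\epsilon$-differentially private.
   Context: A dataset is $D=(x_1,\dots,x_n)\in V^n$, indexed so that $x_1\le\dots\le x_n$, with median $\mathcal{T}(D)=x_{\lceil n/2\rceil}$. The percentile loss $q(D,a)$ for $a\in V$ is: $\min\{|\lceil n/2\rceil-i|: a\in[x_i,\mathcal{T}(D)]\}$ if $a\in[x_1,\mathcal{T}(D)]$; $\min\{|\lceil n/2\rceil-i|: a\in[\mathcal{T}(D),x_i]\}$ if $a\in(\mathcal{T}(D),x_n]$; and $\lceil n/2\rceil$ otherwise. The widened percentile loss is $p_\alpha(D,\ell)=\min_{a\in V:|a-\ell|\le\alpha m}q(D,a)$. $\mathtt{DPExpMed}_\alpha(D)$ is the random point of $V$ with density proportional to $\exp(-\frac{\epsilon}{2}p_\alpha(D,\ell))$, $\ell\in V$. Two datasets are neighboring if, as multisets, they differ in exactly one element. A randomized mechanism $\mathcal{M}:V^n\to V$ is $\epsilon$-differentially private if $\Pr[\mathcal{M}(D)\in S]\le e^{\epsilon}\Pr[\mathcal{M}(D')\in S]$ for all neighboring $D,D'$ and measurable $S\subseteq V$. *)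

theory Defs
  imports "HOL-Analysis.Analysis" "HOL-Library.Multiset"
begin

text \<open>Datasets are lists of reals (the order of the list is irrelevant; the
  sorted order statistics are taken via sort).  Indices are 1-based as in the paper.\<close>

definition med_idx :: "nat \<Rightarrow> nat" where
  "med_idx n = (n + 1) div 2"

definition ord_stat :: "real list \<Rightarrow> nat \<Rightarrow> real" where
  "ord_stat D i = sort D ! (i - 1)"

definition median :: "real list \<Rightarrow> real" where
  "median D = ord_stat D (med_idx (length D))"

definition idx_dist :: "nat \<Rightarrow> nat \<Rightarrow> nat" where
  "idx_dist k i = nat \<bar>int k - int i\<bar>"

definition pct_loss :: "real list \<Rightarrow> real \<Rightarrow> nat" where
  "pct_loss D a =
    (let n = length D; k = med_idx n; T = median D in
     if ord_stat D 1 \<le> a \<and> a \<le> T then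
       (LEAST d. \<exists>i\<in>{1..n}. a \<in> {ord_stat D i..T} \<and> d = idx_dist k i)
     else if T < a \<and> a \<le> ord_stat D n then
       (LEAST d. \<exists>i\<in>{1..n}. a \<in> {T..ord_stat D i} \<and> d = idx_dist k i)
     else k)"

definition dom_V :: "real \<Rightarrow> real set" where
  "dom_V m = {-m/2..m/2}"

definition wide_loss :: "real \<Rightarrow> real \<Rightarrow> real list \<Rightarrow> real \<Rightarrow> nat" where
  "wide_loss m \<alpha> D l =
     (LEAST d. \<exists>a\<in>dom_V m. \<bar>a - l\<bar> \<le> \<alpha> * m \<and> d = pct_loss D a)"

definition expmed_weight :: "real \<Rightarrow> real \<Rightarrow> real \<Rightarrow> real list \<Rightarrow> real \<Rightarrow> real" where
  "expmed_weight \<epsilon> m \<alpha> D l = exp (- (\<epsilon> / 2) * real (wide_loss m \<alpha> D l))"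

text \<open>Pr[DPExpMed_alpha(D) \<in> S]: the output has density proportional to the weight
  on V with respect to Lebesgue measure.\<close>
definition expmed_prob :: "real \<Rightarrow> real \<Rightarrow> real \<Rightarrow> real list \<Rightarrow> real set \<Rightarrow> real" where
  "expmed_prob \<epsilon> m \<alpha> D S =
     (LINT l:(S \<inter> dom_V m)|lborel. expmed_weight \<epsilon> m \<alpha> D l) /
     (LINT l:dom_V m|lborel. expmed_weight \<epsilon> m \<alpha> D l)"

definition neighboring :: "real list \<Rightarrow> real list \<Rightarrow> bool" where
  "neighboring D D' \<longleftrightarrow> length D = length D' \<and> size (mset D - mset D') = 1"

end

theory Submission
  imports Defs
begin


definition cle :: "real list \<Rightarrow> real \<Rightarrow> nat" where
  "cle D y = length (filter (\<lambda>x. x \<le> y) D)"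
definition clt :: "real list \<Rightarrow> real \<Rightarrow> nat" where
  "clt D y = length (filter (\<lambda>x. x < y) D)"

lemma sorted_count:
  fixes xs :: "real list"
  assumes "sorted xs" "j < length xs" "\<forall>u v. u \<le> v \<longrightarrow> P v \<longrightarrow> P u"
  shows "P (xs!j) \<longleftrightarrow> j < length (filter P xs)"
  using assms
proof (induction xs arbitrary: j)
  case Nil then show ?case by simp
next
  case (Cons x xs)
  show ?case
  proof (cases "P x")
    case True
    then show ?thesis using Cons by (cases j) auto
  next
    case False
    have "\<forall>y\<in>set xs. \<not> P y" using Cons.prems False by auto
    then have "filter P xs = []" by (simp add: filter_empty_conv)
    moreover have "\<not> P ((x#xs)!j)"
      using Cons.prems False by (cases j) (auto, metis nth_mem)
    ultimately show ?thesis using False by simp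
  qed
qed

lemma len_filter_sort: "length (filter P (sort D)) = length (filter P D)"
  by (metis mset_filter mset_sort size_mset)

lemma ord_le:
  assumes "1 \<le> j" "j \<le> length D"
  shows "ord_stat D j \<le> a \<longleftrightarrow> j \<le> cle D a"
proof -
  have "ord_stat D j \<le> a \<longleftrightarrow> j - 1 < length (filter (\<lambda>x. x \<le> a) (sort D))"
    unfolding ord_stat_def
    by (rule sorted_count[of "sort D" "j-1" "\<lambda>x. x \<le> a"]) (use assms in auto)
  moreover have "j - 1 < cle D a \<longleftrightarrow> j \<le> cle D a" using assms by arith
  ultimately show ?thesis by (simp add: cle_def len_filter_sort)
qed

lemma ord_lt:
  assumes "1 \<le> j" "j \<le> length D"
  shows "ord_stat D j < a \<longleftrightarrow> j \<le> clt D a"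
proof -
  have "ord_stat D j < a \<longleftrightarrow> j - 1 < length (filter (\<lambda>x. x < a) (sort D))"
    unfolding ord_stat_def
    by (rule sorted_count[of "sort D" "j-1" "\<lambda>x. x < a"]) (use assms in auto)
  moreover have "j - 1 < clt D a \<longleftrightarrow> j \<le> clt D a" using assms by arith
  ultimately show ?thesis by (simp add: clt_def len_filter_sort)
qed

lemma ord_mono:
  assumes "1 \<le> i" "i \<le> j" "j \<le> length D"
  shows "ord_stat D i \<le> ord_stat D j"
  unfolding ord_stat_def using assms
  by (intro sorted_nth_mono) auto

lemma ord_in:
  assumes "1 \<le> j" "j \<le> length D"
  shows "ord_stat D j \<in> set D"
  unfolding ord_stat_def using assms
  by (metis Suc_le_eq Suc_pred' length_sort less_le_trans nth_mem set_sort zero_less_one)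

lemma least_le:
  assumes "\<exists>i. P i"
  shows "(LEAST i::nat. P i) \<le> d \<longleftrightarrow> (\<exists>i\<le>d. P i)"
  using assms by (metis LeastI Least_le order_trans)



lemma n_k:
  assumes "odd n" "n > 0"
  shows "n = 2 * med_idx n - 1" "1 \<le> med_idx n"
  using assms unfolding med_idx_def by (auto elim!: oddE)

lemma pct_le_k:
  assumes "length D > 0"
  shows "pct_loss D a \<le> med_idx (length D)"
proof -
  let ?n = "length D" let ?k = "med_idx ?n" let ?x = "ord_stat D" let ?T = "median D"
  have k1: "1 \<le> ?k" "?k \<le> ?n" using assms unfolding med_idx_def by linarith+
  show ?thesis
  proof (cases "?x 1 \<le> a \<and> a \<le> ?T")
    case True
    have "(LEAST d. \<exists>i\<in>{1..?n}. a \<in> {?x i..?T} \<and> d = idx_dist ?k i) \<le> idx_dist ?k 1"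
      by (rule Least_le) (use True assms in \<open>auto intro!: bexI[of _ 1] simp: Suc_le_eq\<close>)
    moreover have "idx_dist ?k 1 \<le> ?k" unfolding idx_dist_def using k1 by auto
    ultimately show ?thesis using True unfolding pct_loss_def Let_def by simp
  next
    case F1: False
    show ?thesis
    proof (cases "?T < a \<and> a \<le> ?x ?n")
      case True
      have "(LEAST d. \<exists>i\<in>{1..?n}. a \<in> {?T..?x i} \<and> d = idx_dist ?k i) \<le> idx_dist ?k ?n"
        by (rule Least_le) (use True assms in \<open>auto intro!: bexI[of _ ?n] simp: Suc_le_eq\<close>)
      moreover have "idx_dist ?k ?n \<le> ?k" unfolding idx_dist_def using k1 
        unfolding med_idx_def by auto
      ultimately show ?thesis using True F1 unfolding pct_loss_def Let_def by simp
    next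
      case False
      then show ?thesis using F1 unfolding pct_loss_def Let_def by auto
    qed
  qed
qed

lemma idx_dist_ge: "idx_dist k i \<le> d \<Longrightarrow> k - d \<le> i \<and> i \<le> k + d"
  unfolding idx_dist_def by auto

lemma pct_char:
  assumes "odd (length D)" "d < med_idx (length D)"
  shows "pct_loss D a \<le> d \<longleftrightarrow>
     ord_stat D (med_idx (length D) - d) \<le> a \<and> a \<le> ord_stat D (med_idx (length D) + d)"
proof -
  let ?n = "length D" let ?k = "med_idx ?n" let ?x = "ord_stat D" let ?T = "median D"
  have np: "?n > 0" using assms by (cases "?n") auto
  note nk = n_k[OF assms(1) np]
  have T: "?T = ?x ?k" unfolding median_def by simp
  have kd1: "1 \<le> ?k - d" and kd2: "?k + d \<le> ?n" using nk assms by linarith+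
  have xkd1: "?x (?k - d) \<le> ?x ?k" by (rule ord_mono) (use kd1 kd2 in auto)
  have xkd2: "?x ?k \<le> ?x (?k + d)" by (rule ord_mono) (use nk kd2 in auto)
  have x1: "?x 1 \<le> ?x (?k - d)" by (rule ord_mono) (use kd1 kd2 in auto)
  have xn: "?x (?k + d) \<le> ?x ?n" by (rule ord_mono) (use kd2 nk in auto)
  show ?thesis
  proof (cases "?x 1 \<le> a \<and> a \<le> ?T")
    case True
    have ex: "\<exists>e i. i\<in>{1..?n} \<and> a \<in> {?x i..?T} \<and> e = idx_dist ?k i"
    proof -
      have "1\<in>{1..?n} \<and> a \<in> {?x 1..?T} \<and> idx_dist ?k 1 = idx_dist ?k 1" using True np by (auto simp: Suc_le_eq)
      then show ?thesis by blast
    qed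
    have "pct_loss D a = (LEAST e. \<exists>i\<in>{1..?n}. a \<in> {?x i..?T} \<and> e = idx_dist ?k i)"
      using True unfolding pct_loss_def Let_def by simp
    also have "\<dots> \<le> d \<longleftrightarrow> (\<exists>e\<le>d. \<exists>i\<in>{1..?n}. a \<in> {?x i..?T} \<and> e = idx_dist ?k i)"
      by (rule least_le) (use ex in blast)
    also have "\<dots> \<longleftrightarrow> ?x (?k - d) \<le> a \<and> a \<le> ?x (?k + d)"
    proof
      assume "\<exists>e\<le>d. \<exists>i\<in>{1..?n}. a \<in> {?x i..?T} \<and> e = idx_dist ?k i"
      then obtain i where i: "i \<in> {1..?n}" "?x i \<le> a" "idx_dist ?k i \<le> d" by auto
      have "?x (?k - d) \<le> ?x i" by (rule ord_mono) (use i idx_dist_ge[OF i(3)] kd1 in auto)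
      then show "?x (?k - d) \<le> a \<and> a \<le> ?x (?k + d)" using i True T xkd2 by auto
    next
      assume h: "?x (?k - d) \<le> a \<and> a \<le> ?x (?k + d)"
      have "idx_dist ?k (?k - d) = d" unfolding idx_dist_def using kd1 by auto
      then show "\<exists>e\<le>d. \<exists>i\<in>{1..?n}. a \<in> {?x i..?T} \<and> e = idx_dist ?k i"
        using h True kd1 kd2 by (intro exI[of _ d]) (auto intro!: bexI[of _ "?k - d"])
    qed
    finally show ?thesis .
  next
    case F1: False
    show ?thesis
    proof (cases "?T < a \<and> a \<le> ?x ?n")
      case True
      have ex: "\<exists>e i. i\<in>{1..?n} \<and> a \<in> {?T..?x i} \<and> e = idx_dist ?k i"
      proof -
        have "?n\<in>{1..?n} \<and> a \<in> {?T..?x ?n} \<and> idx_dist ?k ?n = idx_dist ?k ?n" using True np by (auto simp: Suc_le_eq)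
        then show ?thesis by blast
      qed
      have "pct_loss D a = (LEAST e. \<exists>i\<in>{1..?n}. a \<in> {?T..?x i} \<and> e = idx_dist ?k i)"
        using True F1 unfolding pct_loss_def Let_def by simp
      also have "\<dots> \<le> d \<longleftrightarrow> (\<exists>e\<le>d. \<exists>i\<in>{1..?n}. a \<in> {?T..?x i} \<and> e = idx_dist ?k i)"
        by (rule least_le) (use ex in blast)
      also have "\<dots> \<longleftrightarrow> ?x (?k - d) \<le> a \<and> a \<le> ?x (?k + d)"
      proof
        assume "\<exists>e\<le>d. \<exists>i\<in>{1..?n}. a \<in> {?T..?x i} \<and> e = idx_dist ?k i"
        then obtain i where i: "i \<in> {1..?n}" "a \<le> ?x i" "idx_dist ?k i \<le> d" by auto
        have "?x i \<le> ?x (?k + d)" by (rule ord_mono) (use i idx_dist_ge[OF i(3)] kd2 in auto)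
        then show "?x (?k - d) \<le> a \<and> a \<le> ?x (?k + d)" using i True T xkd1 by auto
      next
        assume h: "?x (?k - d) \<le> a \<and> a \<le> ?x (?k + d)"
        have "idx_dist ?k (?k + d) = d" unfolding idx_dist_def by auto
        then show "\<exists>e\<le>d. \<exists>i\<in>{1..?n}. a \<in> {?T..?x i} \<and> e = idx_dist ?k i"
          using h True kd1 kd2 by (intro exI[of _ d]) (auto intro!: bexI[of _ "?k + d"])
      qed
      finally show ?thesis .
    next
      case False
      then have "pct_loss D a = ?k" using F1 unfolding pct_loss_def Let_def by auto
      moreover have "\<not> (?x (?k - d) \<le> a \<and> a \<le> ?x (?k + d))"
        using F1 False T x1 xn xkd1 xkd2 by auto
      ultimately show ?thesis using assms by simp
    qed
  qed
qed



definition PP :: "real \<Rightarrow> real \<Rightarrow> real list \<Rightarrow> nat \<Rightarrow> real \<Rightarrow> bool" where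
  "PP m \<alpha> D d l = (med_idx (length D) \<le> d \<or>
     (med_idx (length D) - d \<le> cle D (l + \<alpha>*m) \<and> clt D (l - \<alpha>*m) < med_idx (length D) + d))"

lemma wide_char:
  assumes "odd (length D)" "set D \<subseteq> dom_V m" "l \<in> dom_V m" "0 \<le> \<alpha>*m"
  shows "wide_loss m \<alpha> D l \<le> d \<longleftrightarrow> PP m \<alpha> D d l"
proof -
  let ?n = "length D" let ?k = "med_idx ?n" let ?x = "ord_stat D" let ?r = "\<alpha>*m"
  have np: "?n > 0" using assms by (cases "?n") auto
  note nk = n_k[OF assms(1) np]
  have ex: "\<exists>e a. a\<in>dom_V m \<and> \<bar>a - l\<bar> \<le> ?r \<and> e = pct_loss D a"
    using assms by auto
  have "wide_loss m \<alpha> D l \<le> d \<longleftrightarrow> (\<exists>e\<le>d. \<exists>a\<in>dom_V m. \<bar>a - l\<bar> \<le> ?r \<and> e = pct_loss D a)"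
    unfolding wide_loss_def by (rule least_le) (use ex in blast)
  also have "\<dots> \<longleftrightarrow> (\<exists>a\<in>dom_V m. \<bar>a - l\<bar> \<le> ?r \<and> pct_loss D a \<le> d)" by auto
  also have "\<dots> \<longleftrightarrow> PP m \<alpha> D d l"
  proof (cases "?k \<le> d")
    case True
    have "pct_loss D l \<le> d" using pct_le_k[OF np, of l] True by linarith
    then show ?thesis using True assms unfolding PP_def by (auto intro!: bexI[of _ l])
  next
    case False
    then have dk: "d < ?k" by simp
    have kd1: "1 \<le> ?k - d" and kd2: "?k + d \<le> ?n" using nk dk by linarith+
    have xkd: "?x (?k - d) \<le> ?x (?k + d)" by (rule ord_mono) (use kd1 kd2 in auto)
    have in1: "?x (?k - d) \<in> dom_V m" using ord_in[OF kd1, of D] kd2 assms(2) by auto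
    have in2: "?x (?k + d) \<in> dom_V m" using ord_in[of "?k + d" D] kd1 kd2 assms(2) by auto
    have "(\<exists>a\<in>dom_V m. \<bar>a - l\<bar> \<le> ?r \<and> pct_loss D a \<le> d) \<longleftrightarrow>
          (\<exists>a\<in>dom_V m. \<bar>a - l\<bar> \<le> ?r \<and> ?x (?k - d) \<le> a \<and> a \<le> ?x (?k + d))"
      using pct_char[OF assms(1) dk] by simp
    also have "\<dots> \<longleftrightarrow> ?x (?k - d) \<le> l + ?r \<and> \<not> ?x (?k + d) < l - ?r"
    proof
      assume "\<exists>a\<in>dom_V m. \<bar>a - l\<bar> \<le> ?r \<and> ?x (?k - d) \<le> a \<and> a \<le> ?x (?k + d)"
      then show "?x (?k - d) \<le> l + ?r \<and> \<not> ?x (?k + d) < l - ?r" by auto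
    next
      assume h: "?x (?k - d) \<le> l + ?r \<and> \<not> ?x (?k + d) < l - ?r"
      let ?a = "max (?x (?k - d)) (l - ?r)"
      have "?a \<in> dom_V m" using in1 assms(3,4) unfolding dom_V_def by (auto simp: max_def)
      moreover have "\<bar>?a - l\<bar> \<le> ?r \<and> ?x (?k - d) \<le> ?a \<and> ?a \<le> ?x (?k + d)"
        using h xkd assms(4) by auto
      ultimately show "\<exists>a\<in>dom_V m. \<bar>a - l\<bar> \<le> ?r \<and> ?x (?k - d) \<le> a \<and> a \<le> ?x (?k + d)" by blast
    qed
    also have "\<dots> \<longleftrightarrow> PP m \<alpha> D d l"
      unfolding PP_def using ord_le[OF kd1, of D] ord_lt[of "?k + d" D] kd1 kd2 dk by auto
    finally show ?thesis .
  qed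
  finally show ?thesis .
qed

lemma nat_eq_by_le: "(\<And>d::nat. x \<le> d \<longleftrightarrow> y \<le> d) \<Longrightarrow> x = y"
  by (meson le_antisym order_refl)

lemma PP_mono: "PP m \<alpha> D d l \<Longrightarrow> d \<le> e \<Longrightarrow> PP m \<alpha> D e l"
  unfolding PP_def by auto

lemma wide_eq:
  assumes "odd (length D)" "set D \<subseteq> dom_V m" "l \<in> dom_V m" "0 \<le> \<alpha>*m"
  shows "wide_loss m \<alpha> D l = (LEAST d. PP m \<alpha> D d l)"
proof (rule nat_eq_by_le)
  fix d
  have ex: "\<exists>d. PP m \<alpha> D d l" unfolding PP_def by auto
  show "wide_loss m \<alpha> D l \<le> d \<longleftrightarrow> (LEAST d. PP m \<alpha> D d l) \<le> d"
    unfolding wide_char[OF assms] least_le[OF ex]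
    using PP_mono by blast
qed



lemma nb_count:
  assumes "neighboring D D'"
  shows "length (filter P D) \<le> length (filter P D') + 1"
proof -
  let ?A = "mset D" let ?B = "mset D'" let ?C = "?A - (?A - ?B)"
  have eq: "?A = ?C + (?A - ?B)" by (simp add: subset_mset.diff_add)
  have CB: "?C \<subseteq># ?B" by (metis inter_mset_def subset_mset.inf.cobounded2)
  have "length (filter P D) = size (filter_mset P ?A)" by (metis mset_filter size_mset)
  also have "\<dots> = size (filter_mset P ?C) + size (filter_mset P (?A - ?B))"
  proof -
    have "filter_mset P ?A = filter_mset P ?C + filter_mset P (?A - ?B)"
      by (metis eq filter_union_mset)
    then show ?thesis by (metis size_union)
  qed
  also have "\<dots> \<le> size (filter_mset P ?B) + size (?A - ?B)"
    by (intro add_mono size_mset_mono multiset_filter_mono CB size_filter_mset_lesseq)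
  also have "\<dots> = length (filter P D') + 1" using assms unfolding neighboring_def
    by (metis mset_filter size_mset)
  finally show ?thesis .
qed

lemma nb_sym:
  assumes "neighboring D D'" shows "neighboring D' D"
proof -
  let ?A = "mset D" let ?B = "mset D'"
  have s: "size ?A = size ?B" using assms unfolding neighboring_def by simp
  have "size (?A - ?B) = size ?A - size (?A \<inter># ?B)"
    by (metis diff_intersect_left_idem size_Diff_submset subset_mset.inf.cobounded1)
  moreover have "size (?B - ?A) = size ?B - size (?A \<inter># ?B)"
    by (metis diff_intersect_right_idem size_Diff_submset subset_mset.inf.cobounded2)
  ultimately show ?thesis using assms s unfolding neighboring_def by simp
qed

lemma cle_meas[measurable]: "(\<lambda>y. cle D y) \<in> measurable borel (count_space UNIV)"
proof (induction D)
  case Nil then show ?case by (simp add: cle_def)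
next
  case (Cons x D)
  have e: "(\<lambda>y. cle (x#D) y) = (\<lambda>y. if x \<le> y then Suc (cle D y) else cle D y)"
    by (auto simp: cle_def)
  show ?case unfolding e using Cons by measurable
qed

lemma clt_meas[measurable]: "(\<lambda>y. clt D y) \<in> measurable borel (count_space UNIV)"
proof (induction D)
  case Nil then show ?case by (simp add: clt_def)
next
  case (Cons x D)
  have e: "(\<lambda>y. clt (x#D) y) = (\<lambda>y. if x < y then Suc (clt D y) else clt D y)"
    by (auto simp: clt_def)
  show ?case unfolding e using Cons by measurable
qed

lemma PP_meas: "(\<lambda>l. PP m \<alpha> D d l) \<in> measurable borel (count_space UNIV)"
  unfolding PP_def by measurable

lemma LPP_meas: "(\<lambda>l. real (LEAST d. PP m \<alpha> D d l)) \<in> borel_measurable borel"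
proof -
  have "(\<lambda>l. LEAST d. PP m \<alpha> D d l) \<in> measurable borel (count_space UNIV)"
    by (rule measurable_Least) (rule PP_meas)
  then show ?thesis by measurable
qed



lemma wide_nb:
  assumes "odd (length D)" "set D \<subseteq> dom_V m" "set D' \<subseteq> dom_V m" "l \<in> dom_V m" "0 \<le> \<alpha>*m"
    "neighboring D D'"
  shows "wide_loss m \<alpha> D' l \<le> wide_loss m \<alpha> D l + 1"
proof -
  let ?w = "wide_loss m \<alpha> D l"
  have len: "length D' = length D" using assms(6) unfolding neighboring_def by simp
  have o': "odd (length D')" using assms(1) len by simp
  have P: "PP m \<alpha> D ?w l" using wide_char[OF assms(1,2,4,5), of ?w] by simp
  have c1: "cle D (l + \<alpha>*m) \<le> cle D' (l + \<alpha>*m) + 1"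
    unfolding cle_def by (rule nb_count[OF assms(6)])
  have c2: "clt D' (l - \<alpha>*m) \<le> clt D (l - \<alpha>*m) + 1"
    unfolding clt_def by (rule nb_count[OF nb_sym[OF assms(6)]])
  have "PP m \<alpha> D' (?w + 1) l" using P c1 c2 len unfolding PP_def by auto
  then show ?thesis using wide_char[OF o' assms(3,4,5)] by simp
qed

theorem lemma7p6:
  fixes m \<epsilon> \<alpha> :: real and n :: nat
  assumes "m > 0" and "odd n" and "n > 0" and "\<epsilon> > 0" and "\<alpha> \<in> {0..1}"
  shows "\<forall>D D' S. length D = n \<longrightarrow> set D \<subseteq> dom_V m \<longrightarrow>
           length D' = n \<longrightarrow> set D' \<subseteq> dom_V m \<longrightarrow> neighboring D D' \<longrightarrow>
           S \<in> sets borel \<longrightarrow> S \<subseteq> dom_V m \<longrightarrow>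
           expmed_prob \<epsilon> m \<alpha> D S \<le> exp \<epsilon> * expmed_prob \<epsilon> m \<alpha> D' S"
proof (intro allI impI)
  fix D D' :: "real list" and S :: "real set"
  assume lD: "length D = n" and sD: "set D \<subseteq> dom_V m" and lD': "length D' = n"
    and sD': "set D' \<subseteq> dom_V m" and nb: "neighboring D D'" and Sb: "S \<in> sets borel"
    and SV: "S \<subseteq> dom_V m"
  have r0: "0 \<le> \<alpha>*m" using assms(1,5) by auto
  define g where "g E l = exp (- (\<epsilon> / 2) * real (LEAST d. PP m \<alpha> E d l))" for E l
  define c where "c = exp (\<epsilon> / 2)"
  have c0: "c > 0" unfolding c_def by simp
  have cc: "exp \<epsilon> = c * c" unfolding c_def by (simp flip: exp_add)
  have Vs: "dom_V m \<in> sets lborel" unfolding dom_V_def by simp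
  have SVs: "S \<inter> dom_V m \<in> sets lborel" using Sb Vs by simp
  have Vfin: "emeasure lborel (dom_V m) < \<infinity>" unfolding dom_V_def using assms(1) by simp
  have Vmeas: "measure lborel (dom_V m) = m" unfolding dom_V_def using assms(1) by simp
  have fg: "expmed_weight \<epsilon> m \<alpha> E l = g E l"
    if "l \<in> dom_V m" "odd (length E)" "set E \<subseteq> dom_V m" for E l
    unfolding expmed_weight_def g_def using wide_eq[OF that(2,3,1) r0] by simp
  have gmeas: "g E \<in> borel_measurable lborel" for E
  proof -
    have "(\<lambda>l. real (LEAST d. PP m \<alpha> E d l)) \<in> borel_measurable lborel"
      using LPP_meas[of m \<alpha> E] by simp
    then show ?thesis unfolding g_def[abs_def] by measurable
  qed
  have gint: "set_integrable lborel A (g E)" if "A \<in> sets lborel" "A \<subseteq> dom_V m" for E A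
  proof -
    have "set_integrable lborel (dom_V m) (g E)"
      unfolding set_integrable_def
    proof (rule integrableI_bounded_set_indicator[where B=1])
      show "AE x in lborel. x \<in> dom_V m \<longrightarrow> norm (g E x) \<le> 1"
        using assms(4) by (auto simp: g_def)
    qed (use Vs Vfin gmeas in auto)
    then show ?thesis using set_integrable_subset that by blast
  qed
  have gpos: "g E l \<ge> exp (- (\<epsilon> / 2) * real (med_idx (length E)))" for E l
  proof -
    have "(LEAST d. PP m \<alpha> E d l) \<le> med_idx (length E)"
      by (rule Least_le) (simp add: PP_def)
    then show ?thesis unfolding g_def using assms(4) by (simp add: mult_left_mono)
  qed
  have oD: "odd (length D)" and oD': "odd (length D')" using lD lD' assms(2) by auto
  have pgen: "g A l \<le> c * g B l" if "l \<in> dom_V m" "wide_loss m \<alpha> B l \<le> wide_loss m \<alpha> A l + 1"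
    "odd (length A)" "set A \<subseteq> dom_V m" "odd (length B)" "set B \<subseteq> dom_V m" for A B l
  proof -
    have h: "real (wide_loss m \<alpha> B l) \<le> real (wide_loss m \<alpha> A l) + 1" using that(2) by simp
    have "\<epsilon> * real (wide_loss m \<alpha> B l) \<le> \<epsilon> * (real (wide_loss m \<alpha> A l) + 1)"
      by (rule mult_left_mono) (use h assms(4) in auto)
    then have "- (\<epsilon> / 2) * real (wide_loss m \<alpha> A l) \<le> \<epsilon> / 2 + - (\<epsilon> / 2) * real (wide_loss m \<alpha> B l)"
      by (simp add: algebra_simps)
    then have "exp (- (\<epsilon> / 2) * real (wide_loss m \<alpha> A l)) \<le> exp (\<epsilon> / 2 + - (\<epsilon> / 2) * real (wide_loss m \<alpha> B l))"
      by simp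
    also have "\<dots> = c * exp (- (\<epsilon> / 2) * real (wide_loss m \<alpha> B l))"
      unfolding c_def by (rule exp_add)
    finally show ?thesis
      using fg[OF that(1,3,4)] fg[OF that(1,5,6)] unfolding expmed_weight_def by simp
  qed
  have p1: "g D l \<le> c * g D' l" if "l \<in> dom_V m" for l
    by (rule pgen[OF that wide_nb[OF oD sD sD' that r0 nb] oD sD oD' sD'])
  have p2: "g D' l \<le> c * g D l" if "l \<in> dom_V m" for l
    by (rule pgen[OF that wide_nb[OF oD' sD' sD that r0 nb_sym[OF nb]] oD' sD' oD sD])
  define N where "N E = (LINT l:(S \<inter> dom_V m)|lborel. g E l)" for E
  define Z where "Z E = (LINT l:dom_V m|lborel. g E l)" for E
  have prob: "expmed_prob \<epsilon> m \<alpha> E S = N E / Z E"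
    if "odd (length E)" "set E \<subseteq> dom_V m" for E
  proof -
    have "(LINT l:(S \<inter> dom_V m)|lborel. expmed_weight \<epsilon> m \<alpha> E l) = N E"
      unfolding N_def by (rule set_lebesgue_integral_cong[OF SVs]) (use fg that in auto)
    moreover have "(LINT l:dom_V m|lborel. expmed_weight \<epsilon> m \<alpha> E l) = Z E"
      unfolding Z_def by (rule set_lebesgue_integral_cong[OF Vs]) (use fg that in auto)
    ultimately show ?thesis unfolding expmed_prob_def by simp
  qed
  have Zpos: "Z E > 0" for E
  proof -
    let ?b = "exp (- (\<epsilon> / 2) * real (med_idx (length E)))"
    have "(LINT l:dom_V m|lborel. ?b) \<le> Z E" unfolding Z_def
      by (rule set_integral_mono) (use gint[OF Vs] gpos Vs Vfin in \<open>auto simp: set_integrable_def\<close>)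
    moreover have "(LINT l:dom_V m|lborel. ?b) = m * ?b"
      using set_integral_const[OF Vs, of ?b] Vfin Vmeas by auto
    moreover have "m * ?b > 0" using assms(1) by simp
    ultimately show ?thesis by linarith
  qed
  have N'0: "N D' \<ge> 0"
  proof -
    have "(LINT l:(S \<inter> dom_V m)|lborel. (0::real)) \<le> N D'" unfolding N_def
      by (rule set_integral_mono) (use gint[OF SVs] in \<open>auto simp: g_def set_integrable_def\<close>)
    then show ?thesis by simp
  qed
  have NN: "N D \<le> c * N D'"
  proof -
    have "N D \<le> (LINT l:(S \<inter> dom_V m)|lborel. c * g D' l)" unfolding N_def
      by (rule set_integral_mono) (use gint[OF SVs] p1 in auto)
    then show ?thesis unfolding N_def by simp
  qed
  have ZZ: "Z D' \<le> c * Z D"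
  proof -
    have "Z D' \<le> (LINT l:dom_V m|lborel. c * g D l)" unfolding Z_def
      by (rule set_integral_mono) (use gint[OF Vs] p2 in auto)
    then show ?thesis unfolding Z_def by simp
  qed
  have zD: "Z D > 0" and zD': "Z D' > 0" using Zpos by auto
  have "N D / Z D \<le> c * N D' / Z D" using NN zD by (simp add: divide_right_mono)
  also have "\<dots> = c * N D' * (1 / Z D)" by simp
  also have "\<dots> \<le> c * N D' * (c / Z D')"
  proof (rule mult_left_mono)
    show "1 / Z D \<le> c / Z D'" using ZZ zD zD' by (simp add: divide_simps mult.commute)
    show "0 \<le> c * N D'" using c0 N'0 by simp
  qed
  also have "\<dots> = exp \<epsilon> * (N D' / Z D')" using cc by simp
  finally show "expmed_prob \<epsilon> m \<alpha> D S \<le> exp \<epsilon> * expmed_prob \<epsilon> m \<alpha> D' S"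
    using prob[OF oD sD] prob[OF oD' sD'] by simp
qed

end
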